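(* Let $L_0$ be a set of locations shared between frames $\mathcal{F}_1$ and $\mathcal{F}_2$, with $\mathrm{LEFT}_0$, $C_{cut,0}$, $\mathrm{RIGHT}_2$ as defined below, and assume $\mathrm{lruns}_{C_{cut,0}}(\mathcal{F}_2)\subseteq\mathrm{lruns}_{C_{cut,0}}(\mathcal{F}_1)$. Let $C_s\subseteq\mathrm{LEFT}_0$, $C_o\subseteq\mathrm{RIGHT}_2$, and let $f$ be a function on sets of $C_s$-runs. If $\mathcal{F}_1$ $f$-limits $C_s$-to-$C_{cut,0}$ flow, then $\mathcal{F}_2$ $f$-limits $C_s$-to-$C_o$ flow.
   Context: A frame $\mathcal{F}$ consists of pairwise disjoint sets of locations $\mathcal{LO}$, channels $\mathcal{CH}$, data values $\mathcal{D}$. Each channel $c$ either has both a sender location $\mathrm{sender}(c)$ and a recipient location $\mathrm{recipient}(c)$ (possibly equal), or neither; the endpoint set $\mathrm{ends}(\ell)$ of a location records which channels it sends/receives on, and $\mathrm{chans}(\ell)=\{c:\mathrm{sender}(c)=\ell\text{ or }\mathrm{recipient}(c)=\ell\}$. Each location $\ell$ has a prefix-closed set $\mathrm{traces}(\ell)$ of finite or infinite sequences of labels $(c,v)$, $c\in\mathrm{chans}(\ell)$, $v\in\mathcal{D}$. Events are drawn from a common set $E$ with functions $\mathrm{chan}$ (to channels) and $\mathrm{msg}$ (to data). A system of events is $(B,\preceq)$, $B\subseteq E$, $\preceq$ a partial order with finitely many predecessors for each event; it is an execution of $\mathcal{F}$ ($\in\mathrm{exec}(\mathcal{F})$) iff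 for each location $\ell$ the events whose channel has $\ell$ as sender or recipient are linearly ordered and, as the sequence of labels $(\mathrm{chan}(e),\mathrm{msg}(e))$, form a member of $\mathrm{traces}(\ell)$. For $C$ a set of channels, $\mathcal{B}|_C$ keeps the events with channel in $C$ and the restricted order. $\mathrm{lruns}_C(\mathcal{F})$ is the set of $\mathcal{A}|_C$ for $\mathcal{A}\in\mathrm{exec}(\mathcal{F})$ ($C$-runs). $J_{C}^{C'}(\mathcal{B})$ computed in frame $\mathcal{F}_i$ is $\{\mathcal{A}|_{C'}:\mathcal{A}\in\mathrm{exec}(\mathcal{F}_i),\ \mathcal{A}|_C=\mathcal{B}\}$. A set $L_0$ is shared between $\mathcal{F}_1,\mathcal{F}_2$ (with locations $\mathcal{LO}_i$, channels $\mathcal{CH}_i$) iff $L_0\subseteq\mathcal{LO}_1\cap\mathcal{LO}_2$ and every $\ell\in L_0$ has the same channel endpoints and the same trace set in both frames. Then $\mathrm{LEFT}_0=\{c\in\mathcal{CH}_1:$ both endpoints of $c$ lie in $L_0\}$, $C_{cut,0}=\{c\in\mathcal{CH}_1:$ exactly one endpoint of $c$ lies in $L_0\}$, $\mathrm{RIGHT}_i=\{c\in\mathcal{CH}_i:$ neither endpoint lies in $L_0\}$. A blur operator is a function $f$ on sets with $S\subseteq f(S)$, $f(f(S))=f(S)$, and $f(\bigcup_{a\in I}S_a)=\bigcup_{a\in I}f(S_a)$ for all families; $S$ is $f$-blurred iff $f$ is a blur operator and $f(S)=S$. Frame $\mathcal{F}_i$ $f$-limits $C$-to-$C'$ flow iff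 $f$ is a blur operator and for every $C'$-run $\mathcal{B}$ of $\mathcal{F}_i$, $J_{C'}^{C}(\mathcal{B})$ (computed in $\mathcal{F}_i$) is $f$-blurred. *)

theory Defs
  imports Main
begin

(* A (finite or infinite) sequence of labels: an option-valued function on nat
   that, once undefined, stays undefined. *)
type_synonym ('c, 'd) lseq = "nat \<Rightarrow> ('c \<times> 'd) option"

definition is_seq :: "('c, 'd) lseq \<Rightarrow> bool" where
  "is_seq s \<longleftrightarrow> (\<forall>i. s i = None \<longrightarrow> s (Suc i) = None)"

definition trunc :: "nat \<Rightarrow> ('c, 'd) lseq \<Rightarrow> ('c, 'd) lseq" where
  "trunc n s = (\<lambda>i. if i < n then s i else None)"

(* Frames. Locations, channels, data live in distinct types, hence are disjoint.
   sndr c / rcpt c = None means "no sender / no recipient". *)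
record ('l, 'c, 'd) frame =
  LO :: "'l set"
  CH :: "'c set"
  DV :: "'d set"
  sndr :: "'c \<Rightarrow> 'l option"
  rcpt :: "'c \<Rightarrow> 'l option"
  trs :: "'l \<Rightarrow> ('c, 'd) lseq set"

definition chans :: "('l, 'c, 'd) frame \<Rightarrow> 'l \<Rightarrow> 'c set" where
  "chans F l = {c \<in> CH F. sndr F c = Some l \<or> rcpt F c = Some l}"

definition wf_frame :: "('l, 'c, 'd) frame \<Rightarrow> bool" where
  "wf_frame F \<longleftrightarrow>
     (\<forall>c \<in> CH F. (sndr F c = None \<longleftrightarrow> rcpt F c = None)) \<and>
     (\<forall>c \<in> CH F. \<forall>l. sndr F c = Some l \<longrightarrow> l \<in> LO F) \<and>
     (\<forall>c \<in> CH F. \<forall>l. rcpt F c = Some l \<longrightarrow> l \<in> LO F) \<and>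
     (\<forall>l \<in> LO F. \<forall>s \<in> trs F l. is_seq s \<and> (\<forall>n. trunc n s \<in> trs F l) \<and>
        (\<forall>i c v. s i = Some (c, v) \<longrightarrow> c \<in> chans F l \<and> v \<in> DV F))"

type_synonym 'e sys = "'e set \<times> ('e \<times> 'e) set"

definition is_system :: "'e sys \<Rightarrow> bool" where
  "is_system A \<longleftrightarrow> (let B = fst A; R = snd A in
     R \<subseteq> B \<times> B \<and> refl_on B R \<and> antisym R \<and> trans R \<and>
     (\<forall>e \<in> B. finite {e'. (e', e) \<in> R}))"

definition exec :: "('e \<Rightarrow> 'c) \<Rightarrow> ('e \<Rightarrow> 'd) \<Rightarrow> ('l, 'c, 'd) frame \<Rightarrow> 'e sys set" where
  "exec chan msg F = {A. is_system A \<and>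
     (\<forall>l \<in> LO F. let El = {e \<in> fst A. chan e \<in> chans F l} in
        (\<forall>e1 \<in> El. \<forall>e2 \<in> El. (e1, e2) \<in> snd A \<or> (e2, e1) \<in> snd A) \<and>
        (\<exists>s \<in> trs F l. \<exists>g. bij_betw g {i. s i \<noteq> None} El \<and>
           (\<forall>i \<in> {i. s i \<noteq> None}. \<forall>j \<in> {i. s i \<noteq> None}. i \<le> j \<longleftrightarrow> (g i, g j) \<in> snd A) \<and>
           (\<forall>i \<in> {i. s i \<noteq> None}. s i = Some (chan (g i), msg (g i)))))}"

definition restr :: "('e \<Rightarrow> 'c) \<Rightarrow> 'c set \<Rightarrow> 'e sys \<Rightarrow> 'e sys" where
  "restr chan C A = (let B' = {e \<in> fst A. chan e \<in> C} in (B', snd A \<inter> (B' \<times> B')))"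

definition lruns :: "('e \<Rightarrow> 'c) \<Rightarrow> ('e \<Rightarrow> 'd) \<Rightarrow> 'c set \<Rightarrow> ('l, 'c, 'd) frame \<Rightarrow> 'e sys set" where
  "lruns chan msg C F = restr chan C ` exec chan msg F"

definition J :: "('e \<Rightarrow> 'c) \<Rightarrow> ('e \<Rightarrow> 'd) \<Rightarrow> ('l, 'c, 'd) frame \<Rightarrow> 'c set \<Rightarrow> 'c set \<Rightarrow> 'e sys \<Rightarrow> 'e sys set" where
  "J chan msg F C C' B = {restr chan C' A | A. A \<in> exec chan msg F \<and> restr chan C A = B}"

definition shared :: "('l, 'c, 'd) frame \<Rightarrow> ('l, 'c, 'd) frame \<Rightarrow> 'l set \<Rightarrow> bool" where
  "shared F1 F2 L0 \<longleftrightarrow> L0 \<subseteq> LO F1 \<inter> LO F2 \<and>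
     (\<forall>l \<in> L0. {c \<in> CH F1. sndr F1 c = Some l} = {c \<in> CH F2. sndr F2 c = Some l} \<and>
               {c \<in> CH F1. rcpt F1 c = Some l} = {c \<in> CH F2. rcpt F2 c = Some l} \<and>
               trs F1 l = trs F2 l)"

definition in_L :: "'l option \<Rightarrow> 'l set \<Rightarrow> bool" where
  "in_L x L0 \<longleftrightarrow> (\<exists>l \<in> L0. x = Some l)"

definition LEFT :: "('l, 'c, 'd) frame \<Rightarrow> 'l set \<Rightarrow> 'c set" where
  "LEFT F L0 = {c \<in> CH F. in_L (sndr F c) L0 \<and> in_L (rcpt F c) L0}"

definition Ccut :: "('l, 'c, 'd) frame \<Rightarrow> 'l set \<Rightarrow> 'c set" where
  "Ccut F L0 = {c \<in> CH F. in_L (sndr F c) L0 \<noteq> in_L (rcpt F c) L0}"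

definition RIGHT :: "('l, 'c, 'd) frame \<Rightarrow> 'l set \<Rightarrow> 'c set" where
  "RIGHT F L0 = {c \<in> CH F. \<not> in_L (sndr F c) L0 \<and> \<not> in_L (rcpt F c) L0}"

definition blur_operator :: "('a set \<Rightarrow> 'a set) \<Rightarrow> bool" where
  "blur_operator f \<longleftrightarrow> (\<forall>S. S \<subseteq> f S) \<and> (\<forall>S. f (f S) = f S) \<and>
     (\<forall>(I :: 'a set set set) (Sf :: 'a set set \<Rightarrow> 'a set). f (\<Union>a\<in>I. Sf a) = (\<Union>a\<in>I. f (Sf a)))"

definition blurred :: "('a set \<Rightarrow> 'a set) \<Rightarrow> 'a set \<Rightarrow> bool" where
  "blurred f S \<longleftrightarrow> blur_operator f \<and> f S = S"

definition limits :: "('e \<Rightarrow> 'c) \<Rightarrow> ('e \<Rightarrow> 'd) \<Rightarrow> ('l, 'c, 'd) frame \<Rightarrow> ('e sys set \<Rightarrow> 'e sys set)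
    \<Rightarrow> 'c set \<Rightarrow> 'c set \<Rightarrow> bool" where
  "limits chan msg F f C C' \<longleftrightarrow> blur_operator f \<and>
     (\<forall>B \<in> lruns chan msg C' F. blurred f (J chan msg F C' C B))"

end

theory Submission
  imports Defs
begin


definition lc :: "('e \<Rightarrow> 'c) \<Rightarrow> ('e \<Rightarrow> 'd) \<Rightarrow> ('c, 'd) lseq set \<Rightarrow> 'c set \<Rightarrow> 'e sys \<Rightarrow> bool" where
  "lc chan msg T C A = (let El = {e \<in> fst A. chan e \<in> C} in
        (\<forall>e1 \<in> El. \<forall>e2 \<in> El. (e1, e2) \<in> snd A \<or> (e2, e1) \<in> snd A) \<and>
        (\<exists>s \<in> T. \<exists>g. bij_betw g {i. s i \<noteq> None} El \<and>
           (\<forall>i \<in> {i. s i \<noteq> None}. \<forall>j \<in> {i. s i \<noteq> None}. i \<le> j \<longleftrightarrow> (g i, g j) \<in> snd A) \<and>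
           (\<forall>i \<in> {i. s i \<noteq> None}. s i = Some (chan (g i), msg (g i)))))"

lemma exec_lc: "exec chan msg F = {A. is_system A \<and> (\<forall>l \<in> LO F. lc chan msg (trs F l) (chans F l) A)}"
  unfolding exec_def lc_def by simp

lemma lc_cong:
  fixes chan :: "'e \<Rightarrow> 'c" and msg :: "'e \<Rightarrow> 'd"
  assumes "{e \<in> fst A. chan e \<in> C} = {e \<in> fst A'. chan e \<in> C}"
    and "\<And>x y. x \<in> {e \<in> fst A. chan e \<in> C} \<Longrightarrow> y \<in> {e \<in> fst A. chan e \<in> C} \<Longrightarrow> (x,y) \<in> snd A \<longleftrightarrow> (x,y) \<in> snd A'"
  shows "lc chan msg T C A = lc chan msg T C A'"
proof -
  let ?E = "{e \<in> fst A. chan e \<in> C}"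
  have 1: "(\<forall>e1 \<in> ?E. \<forall>e2 \<in> ?E. (e1, e2) \<in> snd A \<or> (e2, e1) \<in> snd A) = (\<forall>e1 \<in> ?E. \<forall>e2 \<in> ?E. (e1, e2) \<in> snd A' \<or> (e2, e1) \<in> snd A')"
    using assms(2) by blast
  have 2: "(bij_betw g {i. s i \<noteq> None} ?E \<and>
           (\<forall>i \<in> {i. s i \<noteq> None}. \<forall>j \<in> {i. s i \<noteq> None}. i \<le> j \<longleftrightarrow> (g i, g j) \<in> snd A) \<and> Q) =
          (bij_betw g {i. s i \<noteq> None} ?E \<and>
           (\<forall>i \<in> {i. s i \<noteq> None}. \<forall>j \<in> {i. s i \<noteq> None}. i \<le> j \<longleftrightarrow> (g i, g j) \<in> snd A') \<and> Q)" for g Q and s :: "('c,'d) lseq"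
  proof -
    { assume b: "bij_betw g {i. s i \<noteq> None} ?E"
      have "\<And>i. i \<in> {i. s i \<noteq> None} \<Longrightarrow> g i \<in> ?E" using bij_betw_apply[OF b] by blast
      hence ?thesis using assms(2) by (metis (no_types, lifting)) }
    thus ?thesis by blast
  qed
  show ?thesis unfolding lc_def Let_def assms(1)[symmetric] 
    apply (rule conj_cong[OF 1])
    apply (rule bex_cong[OF refl])
    apply (rule arg_cong[where f=Ex])
    apply (rule ext)
    apply (rule 2)
    done
qed

lemma lc_restr: "lc chan msg T C (restr chan C A) = lc chan msg T C A"
  by (rule lc_cong) (auto simp: restr_def Let_def)



lemma glue:
  fixes chan :: "'e \<Rightarrow> 'c"
  assumes sX: "is_system X" and sY: "is_system Y" and PK: "P \<inter> K = {}"
    and eq: "restr chan K X = restr chan K Y"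
  shows "\<exists>G. is_system G \<and> (\<forall>C. C \<subseteq> P \<union> K \<longrightarrow> restr chan C G = restr chan C X)
           \<and> (\<forall>C. C \<inter> P = {} \<longrightarrow> restr chan C G = restr chan C Y)"
proof -
  obtain BX RX where X: "X = (BX, RX)" by (cases X)
  obtain BY RY where Y: "Y = (BY, RY)" by (cases Y)
  define BL where "BL = {e \<in> BX. chan e \<in> P \<union> K}"
  define BR where "BR = {e \<in> BY. chan e \<notin> P}"
  define RL where "RL = RX \<inter> BL \<times> BL"
  define RR where "RR = RY \<inter> BR \<times> BR"
  define T where "T = RL \<union> RR \<union> RL O RR \<union> RR O RL"
  have sX': "RX \<subseteq> BX \<times> BX" "refl_on BX RX" "antisym RX" "trans RX" "\<forall>e\<in>BX. finite {e'. (e', e) \<in> RX}"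
    using sX unfolding X is_system_def Let_def by auto
  have sY': "RY \<subseteq> BY \<times> BY" "refl_on BY RY" "antisym RY" "trans RY" "\<forall>e\<in>BY. finite {e'. (e', e) \<in> RY}"
    using sY unfolding Y is_system_def Let_def by auto
  have eqB: "{e \<in> BX. chan e \<in> K} = {e \<in> BY. chan e \<in> K}"
    using eq unfolding X Y restr_def Let_def by auto
  have eqR: "RX \<inter> {e \<in> BX. chan e \<in> K} \<times> {e \<in> BX. chan e \<in> K} = RY \<inter> {e \<in> BY. chan e \<in> K} \<times> {e \<in> BY. chan e \<in> K}"
    using eq unfolding X Y restr_def Let_def by auto
  have LR: "x \<in> BL \<Longrightarrow> x \<in> BR \<Longrightarrow> chan x \<in> K \<and> x \<in> BX \<and> x \<in> BY" for x
    unfolding BL_def BR_def by auto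
  have compat: "x \<in> BL \<Longrightarrow> x \<in> BR \<Longrightarrow> y \<in> BL \<Longrightarrow> y \<in> BR \<Longrightarrow> (x,y) \<in> RL \<longleftrightarrow> (x,y) \<in> RR" for x y
  proof -
    assume a: "x \<in> BL" "x \<in> BR" "y \<in> BL" "y \<in> BR"
    hence "(x,y) \<in> RX \<longleftrightarrow> (x,y) \<in> RY" using LR[of x] LR[of y] eqR by blast
    thus ?thesis using a unfolding RL_def RR_def by auto
  qed
  have RLs: "RL \<subseteq> BL \<times> BL" and RRs: "RR \<subseteq> BR \<times> BR" unfolding RL_def RR_def by auto
  have RLt: "trans RL" using sX'(4) unfolding RL_def trans_def by blast
  have RRt: "trans RR" using sY'(4) unfolding RR_def trans_def by blast
  have RLa: "antisym RL" using sX'(3) unfolding RL_def antisym_def by blast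
  have RRa: "antisym RR" using sY'(3) unfolding RR_def antisym_def by blast
  have RLr: "x \<in> BL \<Longrightarrow> (x,x) \<in> RL" for x using sX'(2) unfolding RL_def refl_on_def BL_def by auto
  have RRr: "x \<in> BR \<Longrightarrow> (x,x) \<in> RR" for x using sY'(2) unfolding RR_def refl_on_def BR_def by auto
  have TL: "(a,b) \<in> T \<Longrightarrow> a \<in> BL \<Longrightarrow> b \<in> BL \<Longrightarrow> (a,b) \<in> RL" for a b
  proof -
    assume "(a,b) \<in> T" "a \<in> BL" "b \<in> BL"
    thus ?thesis unfolding T_def
    proof (elim UnE relcompE)
      assume "(a,b) \<in> RR" thus ?thesis using compat RRs \<open>a \<in> BL\<close> \<open>b \<in> BL\<close> by blast
    next
      fix x y z k assume "(a,b) = (x,z)" "(x,k) \<in> RL" "(k,z) \<in> RR"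
      thus ?thesis using compat RRs RLs \<open>b \<in> BL\<close> RLt unfolding trans_def by blast
    next
      fix x y z k assume "(a,b) = (x,z)" "(x,k) \<in> RR" "(k,z) \<in> RL"
      thus ?thesis using compat RRs RLs \<open>a \<in> BL\<close> RLt unfolding trans_def by blast
    qed
  qed
  have TR: "(a,b) \<in> T \<Longrightarrow> a \<in> BR \<Longrightarrow> b \<in> BR \<Longrightarrow> (a,b) \<in> RR" for a b
  proof -
    assume "(a,b) \<in> T" "a \<in> BR" "b \<in> BR"
    thus ?thesis unfolding T_def
    proof (elim UnE relcompE)
      assume "(a,b) \<in> RL" thus ?thesis using compat RLs \<open>a \<in> BR\<close> \<open>b \<in> BR\<close> by blast
    next
      fix x y z k assume "(a,b) = (x,z)" "(x,k) \<in> RL" "(k,z) \<in> RR"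
      thus ?thesis using compat RRs RLs \<open>a \<in> BR\<close> RRt unfolding trans_def by blast
    next
      fix x y z k assume "(a,b) = (x,z)" "(x,k) \<in> RR" "(k,z) \<in> RL"
      thus ?thesis using compat RRs RLs \<open>b \<in> BR\<close> RRt unfolding trans_def by blast
    qed
  qed
  have Ts: "T \<subseteq> (BL \<union> BR) \<times> (BL \<union> BR)" unfolding T_def using RLs RRs by blast
  have Tr: "refl_on (BL \<union> BR) T" unfolding refl_on_def T_def using Ts RLr RRr unfolding T_def by blast
  have h1: "(a,b) \<in> T \<Longrightarrow> b \<in> BL \<Longrightarrow> (a,b) \<in> RL \<or> (\<exists>k. (a,k) \<in> RR \<and> (k,b) \<in> RL)" for a b
  proof -
    assume "(a,b) \<in> T" "b \<in> BL"
    thus ?thesis unfolding T_def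
    proof (elim UnE relcompE)
      assume "(a,b) \<in> RR" thus ?thesis using RLr RRs \<open>b \<in> BL\<close> by blast
    next
      fix x y z k assume "(a,b) = (x,z)" "(x,k) \<in> RL" "(k,z) \<in> RR"
      thus ?thesis using compat RRs RLs \<open>b \<in> BL\<close> RLt unfolding trans_def by blast
    qed auto
  qed
  have h2: "(b,c) \<in> T \<Longrightarrow> b \<in> BL \<Longrightarrow> (b,c) \<in> RL \<or> (\<exists>k. (b,k) \<in> RL \<and> (k,c) \<in> RR)" for b c
  proof -
    assume "(b,c) \<in> T" "b \<in> BL"
    thus ?thesis unfolding T_def
    proof (elim UnE relcompE)
      assume "(b,c) \<in> RR" thus ?thesis using RLr RRs \<open>b \<in> BL\<close> by blast
    next
      fix x y z k assume "(b,c) = (x,z)" "(x,k) \<in> RR" "(k,z) \<in> RL"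
      thus ?thesis using compat RRs RLs \<open>b \<in> BL\<close> RLt unfolding trans_def by blast
    qed auto
  qed
  have h3: "(a,b) \<in> T \<Longrightarrow> b \<in> BR \<Longrightarrow> (a,b) \<in> RR \<or> (\<exists>k. (a,k) \<in> RL \<and> (k,b) \<in> RR)" for a b
  proof -
    assume "(a,b) \<in> T" "b \<in> BR"
    thus ?thesis unfolding T_def
    proof (elim UnE relcompE)
      assume "(a,b) \<in> RL" thus ?thesis using RRr RLs \<open>b \<in> BR\<close> by blast
    next
      fix x y z k assume "(a,b) = (x,z)" "(x,k) \<in> RR" "(k,z) \<in> RL"
      thus ?thesis using compat RRs RLs \<open>b \<in> BR\<close> RRt unfolding trans_def by blast
    qed auto
  qed
  have h4: "(b,c) \<in> T \<Longrightarrow> b \<in> BR \<Longrightarrow> (b,c) \<in> RR \<or> (\<exists>k. (b,k) \<in> RR \<and> (k,c) \<in> RL)" for b c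
  proof -
    assume "(b,c) \<in> T" "b \<in> BR"
    thus ?thesis unfolding T_def
    proof (elim UnE relcompE)
      assume "(b,c) \<in> RL" thus ?thesis using RRr RLs \<open>b \<in> BR\<close> by blast
    next
      fix x y z k assume "(b,c) = (x,z)" "(x,k) \<in> RL" "(k,z) \<in> RR"
      thus ?thesis using compat RRs RLs \<open>b \<in> BR\<close> RRt unfolding trans_def by blast
    qed auto
  qed
  have Tt: "trans T"
  proof (rule transI)
    fix a b c assume ab: "(a,b) \<in> T" and bc: "(b,c) \<in> T"
    have "b \<in> BL \<or> b \<in> BR" using ab Ts by blast
    thus "(a,c) \<in> T"
    proof
      assume b: "b \<in> BL"
      from h1[OF ab b] h2[OF bc b] show ?thesis
      proof (elim disjE exE conjE)
        assume "(a,b) \<in> RL" "(b,c) \<in> RL" thus ?thesis using RLt unfolding T_def trans_def by blast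
      next
        fix k assume "(a,b) \<in> RL" "(b,k) \<in> RL" "(k,c) \<in> RR" thus ?thesis using RLt unfolding T_def trans_def by blast
      next
        fix k assume "(a,k) \<in> RR" "(k,b) \<in> RL" "(b,c) \<in> RL" thus ?thesis using RLt unfolding T_def trans_def by blast
      next
        fix k k' assume 1: "(a,k) \<in> RR" "(k,b) \<in> RL" "(b,k') \<in> RL" "(k',c) \<in> RR"
        hence "(k,k') \<in> RL" using RLt unfolding trans_def by blast
        moreover have "k \<in> BL" "k \<in> BR" "k' \<in> BL" "k' \<in> BR" using 1 RLs RRs by auto
        ultimately have "(k,k') \<in> RR" using compat by blast
        thus ?thesis using 1 RRt unfolding T_def trans_def by blast
      qed
    next
      assume b: "b \<in> BR"
      from h3[OF ab b] h4[OF bc b] show ?thesis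
      proof (elim disjE exE conjE)
        assume "(a,b) \<in> RR" "(b,c) \<in> RR" thus ?thesis using RRt unfolding T_def trans_def by blast
      next
        fix k assume "(a,b) \<in> RR" "(b,k) \<in> RR" "(k,c) \<in> RL" thus ?thesis using RRt unfolding T_def trans_def by blast
      next
        fix k assume "(a,k) \<in> RL" "(k,b) \<in> RR" "(b,c) \<in> RR" thus ?thesis using RRt unfolding T_def trans_def by blast
      next
        fix k k' assume 1: "(a,k) \<in> RL" "(k,b) \<in> RR" "(b,k') \<in> RR" "(k',c) \<in> RL"
        hence "(k,k') \<in> RR" using RRt unfolding trans_def by blast
        moreover have "k \<in> BL" "k \<in> BR" "k' \<in> BL" "k' \<in> BR" using 1 RLs RRs by auto
        ultimately have "(k,k') \<in> RL" using compat by blast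
        thus ?thesis using 1 RLt unfolding T_def trans_def by blast
      qed
    qed
  qed
  have Ta: "antisym T"
  proof (rule antisymI)
    fix a b assume ab: "(a,b) \<in> T" and ba: "(b,a) \<in> T"
    have "(a,a) \<in> T" "(b,b) \<in> T" using Tt ab ba unfolding trans_def by blast+
    show "a = b"
    proof (cases "a \<in> BL \<and> b \<in> BL")
      case True thus ?thesis using TL ab ba RLa unfolding antisym_def by blast
    next
      case F1: False
      show ?thesis
      proof (cases "a \<in> BR \<and> b \<in> BR")
        case True thus ?thesis using TR ab ba RRa unfolding antisym_def by blast
      next
        case False
        have "a \<in> BL \<union> BR" "b \<in> BL \<union> BR" using ab Ts by auto
        hence "(a \<in> BL \<and> a \<notin> BR \<and> b \<in> BR \<and> b \<notin> BL) \<or> (b \<in> BL \<and> b \<notin> BR \<and> a \<in> BR \<and> a \<notin> BL)"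
          using F1 False by blast
        thus ?thesis
        proof
          assume c: "a \<in> BL \<and> a \<notin> BR \<and> b \<in> BR \<and> b \<notin> BL"
          from h3[OF ab] c obtain k where k: "(a,k) \<in> RL" "(k,b) \<in> RR" using RRs by blast
          from h4[OF ba] c obtain k' where k': "(b,k') \<in> RR" "(k',a) \<in> RL" using RRs by blast
          have "(k,k') \<in> RR" using k k' RRt unfolding trans_def by blast
          moreover have "k \<in> BL" "k \<in> BR" "k' \<in> BL" "k' \<in> BR" using k k' RLs RRs by auto
          ultimately have "(k,k') \<in> RL" using compat by blast
          hence "(k,a) \<in> RL" using k' RLt unfolding trans_def by blast
          hence "k = a" using k RLa unfolding antisym_def by blast
          thus ?thesis using c \<open>k \<in> BR\<close> by blast
        next
          assume c: "b \<in> BL \<and> b \<notin> BR \<and> a \<in> BR \<and> a \<notin> BL"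
          from h3[OF ba] c obtain k where k: "(b,k) \<in> RL" "(k,a) \<in> RR" using RRs by blast
          from h4[OF ab] c obtain k' where k': "(a,k') \<in> RR" "(k',b) \<in> RL" using RRs by blast
          have "(k,k') \<in> RR" using k k' RRt unfolding trans_def by blast
          moreover have "k \<in> BL" "k \<in> BR" "k' \<in> BL" "k' \<in> BR" using k k' RLs RRs by auto
          ultimately have "(k,k') \<in> RL" using compat by blast
          hence "(k,b) \<in> RL" using k' RLt unfolding trans_def by blast
          hence "k = b" using k RLa unfolding antisym_def by blast
          thus ?thesis using c \<open>k \<in> BR\<close> by blast
        qed
      qed
    qed
  qed
  have finRL: "finite {e'. (e',x) \<in> RL}" for x
  proof (cases "x \<in> BX")
    case True thus ?thesis using sX'(5) unfolding RL_def by (auto intro: finite_subset)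
  next
    case False hence "{e'. (e',x) \<in> RL} = {}" unfolding RL_def BL_def by auto
    thus ?thesis by simp
  qed
  have finRR: "finite {e'. (e',x) \<in> RR}" for x
  proof (cases "x \<in> BY")
    case True thus ?thesis using sY'(5) unfolding RR_def by (auto intro: finite_subset)
  next
    case False hence "{e'. (e',x) \<in> RR} = {}" unfolding RR_def BR_def by auto
    thus ?thesis by simp
  qed
  have Tf: "finite {e'. (e',x) \<in> T}" for x
  proof (rule finite_subset)
    show "{e'. (e',x) \<in> T} \<subseteq> {e'. (e',x)\<in>RL} \<union> {e'. (e',x)\<in>RR} \<union> (\<Union>k\<in>{k. (k,x)\<in>RR}. {e'. (e',k)\<in>RL}) \<union> (\<Union>k\<in>{k. (k,x)\<in>RL}. {e'. (e',k)\<in>RR})"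
      unfolding T_def by blast
    show "finite ({e'. (e',x)\<in>RL} \<union> {e'. (e',x)\<in>RR} \<union> (\<Union>k\<in>{k. (k,x)\<in>RR}. {e'. (e',k)\<in>RL}) \<union> (\<Union>k\<in>{k. (k,x)\<in>RL}. {e'. (e',k)\<in>RR}))"
      using finRL finRR by auto
  qed
  have TG: "is_system (BL \<union> BR, T)"
    unfolding is_system_def Let_def using Ts Tr Ta Tt Tf by auto
  have TsubL: "RL \<subseteq> T" and TsubR: "RR \<subseteq> T" unfolding T_def by auto
  have r1: "restr chan C (BL \<union> BR, T) = restr chan C X" if C: "C \<subseteq> P \<union> K" for C
  proof -
    have E: "{e \<in> BL \<union> BR. chan e \<in> C} = {e \<in> BX. chan e \<in> C}"
      using C eqB unfolding BL_def BR_def by blast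
    have E2: "{e \<in> BX. chan e \<in> C} \<subseteq> BL" using C unfolding BL_def by blast
    have "T \<inter> {e \<in> BX. chan e \<in> C} \<times> {e \<in> BX. chan e \<in> C} = RX \<inter> {e \<in> BX. chan e \<in> C} \<times> {e \<in> BX. chan e \<in> C}"
      using E2 TL TsubL unfolding RL_def by blast
    thus ?thesis unfolding restr_def Let_def X using E by simp
  qed
  have r2: "restr chan C (BL \<union> BR, T) = restr chan C Y" if C: "C \<inter> P = {}" for C
  proof -
    have E: "{e \<in> BL \<union> BR. chan e \<in> C} = {e \<in> BY. chan e \<in> C}"
      using C eqB unfolding BL_def BR_def by blast
    have E2: "{e \<in> BY. chan e \<in> C} \<subseteq> BR" using C unfolding BR_def by blast
    have "T \<inter> {e \<in> BY. chan e \<in> C} \<times> {e \<in> BY. chan e \<in> C} = RY \<inter> {e \<in> BY. chan e \<in> C} \<times> {e \<in> BY. chan e \<in> C}"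
      using E2 TR TsubR unfolding RR_def by blast
    thus ?thesis unfolding restr_def Let_def Y using E by simp
  qed
  show ?thesis using TG r1 r2 by blast
qed



lemma glue_exec:
  fixes chan :: "'e \<Rightarrow> 'c" and msg :: "'e \<Rightarrow> 'd"
  assumes X: "X \<in> exec chan msg FX" and Y: "Y \<in> exec chan msg Ft" and PK: "P \<inter> K = {}"
    and eq: "restr chan K X = restr chan K Y"
    and locs: "\<forall>l\<in>LO Ft. (chans Ft l \<subseteq> P \<union> K \<and> l \<in> LO FX \<and> chans FX l = chans Ft l \<and> trs FX l = trs Ft l) \<or> chans Ft l \<inter> P = {}"
  shows "\<exists>G \<in> exec chan msg Ft. (\<forall>C. C \<subseteq> P \<union> K \<longrightarrow> restr chan C G = restr chan C X)
           \<and> (\<forall>C. C \<inter> P = {} \<longrightarrow> restr chan C G = restr chan C Y)"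
proof -
  have sX: "is_system X" and lX: "\<forall>l \<in> LO FX. lc chan msg (trs FX l) (chans FX l) X"
    using X unfolding exec_lc by auto
  have sY: "is_system Y" and lY: "\<forall>l \<in> LO Ft. lc chan msg (trs Ft l) (chans Ft l) Y"
    using Y unfolding exec_lc by auto
  obtain G where G: "is_system G" "\<forall>C. C \<subseteq> P \<union> K \<longrightarrow> restr chan C G = restr chan C X"
     "\<forall>C. C \<inter> P = {} \<longrightarrow> restr chan C G = restr chan C Y"
    using glue[OF sX sY PK eq] by blast
  have "lc chan msg (trs Ft l) (chans Ft l) G" if l: "l \<in> LO Ft" for l
  proof -
    from locs l consider "chans Ft l \<subseteq> P \<union> K" "l \<in> LO FX" "chans FX l = chans Ft l" "trs FX l = trs Ft l"
      | "chans Ft l \<inter> P = {}" by blast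
    thus ?thesis
    proof cases
      case 1
      have "lc chan msg (trs Ft l) (chans Ft l) G = lc chan msg (trs Ft l) (chans Ft l) (restr chan (chans Ft l) G)"
        by (simp add: lc_restr)
      also have "\<dots> = lc chan msg (trs Ft l) (chans Ft l) (restr chan (chans Ft l) X)" using G(2) 1 by simp
      also have "\<dots> = lc chan msg (trs FX l) (chans FX l) X" using 1 by (simp add: lc_restr)
      finally show ?thesis using lX[rule_format, OF 1(2)] 1(3,4) by simp
    next
      case 2
      have "lc chan msg (trs Ft l) (chans Ft l) G = lc chan msg (trs Ft l) (chans Ft l) (restr chan (chans Ft l) G)"
        by (simp add: lc_restr)
      also have "\<dots> = lc chan msg (trs Ft l) (chans Ft l) (restr chan (chans Ft l) Y)" using G(3) 2 by simp
      also have "\<dots> = lc chan msg (trs Ft l) (chans Ft l) Y" by (simp add: lc_restr)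
      finally show ?thesis using lY l by simp
    qed
  qed
  hence "G \<in> exec chan msg Ft" using G(1) unfolding exec_lc by auto
  thus ?thesis using G by blast
qed



theorem theorem3:
  fixes chan :: "'e \<Rightarrow> 'c" and msg :: "'e \<Rightarrow> 'd"
    and F1 F2 :: "('l, 'c, 'd) frame" and L0 :: "'l set"
    and Cs Co :: "'c set" and f :: "'e sys set \<Rightarrow> 'e sys set"
  assumes "wf_frame F1" and "wf_frame F2"
    and "shared F1 F2 L0"
    and "lruns chan msg (Ccut F1 L0) F2 \<subseteq> lruns chan msg (Ccut F1 L0) F1"
    and "Cs \<subseteq> LEFT F1 L0" and "Co \<subseteq> RIGHT F2 L0"
    and "limits chan msg F1 f Cs (Ccut F1 L0)"
  shows "limits chan msg F2 f Cs Co"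
proof -
  note sh = assms(3)[unfolded shared_def]
  define P where "P = LEFT F1 L0"
  define K where "K = Ccut F1 L0"
  have PK: "P \<inter> K = {}" unfolding P_def K_def LEFT_def Ccut_def by auto
  have chEq: "l \<in> L0 \<Longrightarrow> chans F2 l = chans F1 l" for l
    using sh unfolding chans_def by blast
  have trEq: "l \<in> L0 \<Longrightarrow> trs F2 l = trs F1 l" for l using sh by blast
  have ch1L: "l \<in> L0 \<Longrightarrow> chans F1 l \<subseteq> P \<union> K" for l
    unfolding chans_def P_def K_def LEFT_def Ccut_def in_L_def by auto
  have ch1N: "l \<notin> L0 \<Longrightarrow> chans F1 l \<inter> P = {}" for l
    unfolding chans_def P_def LEFT_def in_L_def by auto
  have ch2N: "l \<notin> L0 \<Longrightarrow> chans F2 l \<inter> P = {}" for l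
  proof -
    assume l: "l \<notin> L0"
    { fix c assume c: "c \<in> chans F2 l" "c \<in> P"
      then obtain m1 m2 where m: "m1 \<in> L0" "m2 \<in> L0" "sndr F1 c = Some m1" "rcpt F1 c = Some m2" "c \<in> CH F1"
        unfolding P_def LEFT_def in_L_def by auto
      hence "sndr F2 c = Some m1" "rcpt F2 c = Some m2" using sh by blast+
      hence False using c(1) l m unfolding chans_def by auto }
    thus ?thesis by blast
  qed
  have CoP: "Co \<inter> P = {}" and CoK: "Co \<inter> K = {}"
  proof -
    { fix c assume c: "c \<in> Co" "c \<in> P \<union> K"
      then obtain m where m: "m \<in> L0" "c \<in> CH F1" "sndr F1 c = Some m \<or> rcpt F1 c = Some m"
        unfolding P_def K_def LEFT_def Ccut_def in_L_def by auto
      hence "sndr F2 c = Some m \<or> rcpt F2 c = Some m" using sh by blast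
      hence False using c(1) assms(6) m(1) unfolding RIGHT_def in_L_def by auto }
    thus "Co \<inter> P = {}" "Co \<inter> K = {}" by blast+
  qed
  have CsP: "Cs \<subseteq> P" using assms(5) P_def by simp
  have KPK: "K \<subseteq> P \<union> K" by blast
  have L0s: "L0 \<subseteq> LO F1" "L0 \<subseteq> LO F2" using sh by auto
  have locs1: "\<forall>l\<in>LO F1. (chans F1 l \<subseteq> P \<union> K \<and> l \<in> LO F2 \<and> chans F2 l = chans F1 l \<and> trs F2 l = trs F1 l) \<or> chans F1 l \<inter> P = {}"
    using ch1L ch1N chEq trEq L0s by blast
  have locs2: "\<forall>l\<in>LO F2. (chans F2 l \<subseteq> P \<union> K \<and> l \<in> LO F1 \<and> chans F1 l = chans F2 l \<and> trs F1 l = trs F2 l) \<or> chans F2 l \<inter> P = {}"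
    using ch1L ch2N chEq trEq L0s by fastforce
  have lim: "blur_operator f" "\<forall>D \<in> lruns chan msg K F1. blurred f (J chan msg F1 K Cs D)"
    using assms(7) unfolding limits_def K_def by auto
  have lrK: "lruns chan msg K F2 \<subseteq> lruns chan msg K F1" using assms(4) K_def by simp
  show ?thesis unfolding limits_def
  proof (intro conjI ballI lim(1))
    fix B assume B: "B \<in> lruns chan msg Co F2"
    define S where "S = {restr chan K A | A. A \<in> exec chan msg F2 \<and> restr chan Co A = B}"
    have SK: "S \<subseteq> lruns chan msg K F1" using lrK unfolding S_def lruns_def by blast
    have Jeq: "J chan msg F2 Co Cs B = (\<Union>D\<in>S. J chan msg F1 K Cs D)"
    proof
      show "J chan msg F2 Co Cs B \<subseteq> (\<Union>D\<in>S. J chan msg F1 K Cs D)"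
      proof
        fix Z assume "Z \<in> J chan msg F2 Co Cs B"
        then obtain A where A: "A \<in> exec chan msg F2" "restr chan Co A = B" "Z = restr chan Cs A"
          unfolding J_def by blast
        have "restr chan K A \<in> lruns chan msg K F1" using lrK A(1) unfolding lruns_def by blast
        then obtain A' where A': "A' \<in> exec chan msg F1" "restr chan K A' = restr chan K A"
          unfolding lruns_def by auto
        obtain G where G: "G \<in> exec chan msg F1" "\<forall>C. C \<subseteq> P \<union> K \<longrightarrow> restr chan C G = restr chan C A"
          using glue_exec[OF A(1) A'(1) PK A'(2)[symmetric] locs1] by blast
        have "restr chan K G = restr chan K A" "restr chan Cs G = restr chan Cs A"
          using G(2) CsP by auto
        hence "Z \<in> J chan msg F1 K Cs (restr chan K A)" using G(1) A(3) unfolding J_def by (intro CollectI exI[of _ G]) simp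
        moreover have "restr chan K A \<in> S" using A unfolding S_def by blast
        ultimately show "Z \<in> (\<Union>D\<in>S. J chan msg F1 K Cs D)" by blast
      qed
    next
      show "(\<Union>D\<in>S. J chan msg F1 K Cs D) \<subseteq> J chan msg F2 Co Cs B"
      proof
        fix Z assume "Z \<in> (\<Union>D\<in>S. J chan msg F1 K Cs D)"
        then obtain A A' where A: "A \<in> exec chan msg F2" "restr chan Co A = B"
          and A': "A' \<in> exec chan msg F1" "restr chan K A' = restr chan K A" "Z = restr chan Cs A'"
          unfolding S_def J_def by blast
        obtain G where G: "G \<in> exec chan msg F2" "\<forall>C. C \<subseteq> P \<union> K \<longrightarrow> restr chan C G = restr chan C A'"
            "\<forall>C. C \<inter> P = {} \<longrightarrow> restr chan C G = restr chan C A"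
          using glue_exec[OF A'(1) A(1) PK A'(2) locs2] by blast
        have "restr chan Co G = B" "restr chan Cs G = Z" using G CsP CoP A(2) A'(3) by auto
        thus "Z \<in> J chan msg F2 Co Cs B" using G(1) unfolding J_def by blast
      qed
    qed
    define I :: "'e sys set set set" where "I = (\<lambda>D. {{D}}) ` S"
    define Sf where "Sf = (\<lambda>a :: 'e sys set set. J chan msg F1 K Cs (THE D. a = {{D}}))"
    have U: "(\<Union>a\<in>I. Sf a) = (\<Union>D\<in>S. J chan msg F1 K Cs D)" unfolding I_def Sf_def by simp
    have U2: "(\<Union>a\<in>I. f (Sf a)) = (\<Union>D\<in>S. f (J chan msg F1 K Cs D))" unfolding I_def Sf_def by simp
    have "f (J chan msg F2 Co Cs B) = (\<Union>D\<in>S. f (J chan msg F1 K Cs D))"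
      using lim(1) unfolding Jeq blur_operator_def U[symmetric] U2[symmetric] by blast
    also have "\<dots> = (\<Union>D\<in>S. J chan msg F1 K Cs D)"
      using lim(2) SK unfolding blurred_def by auto
    finally show "blurred f (J chan msg F2 Co Cs B)" using lim(1) Jeq unfolding blurred_def by simp
  qed
qed

end
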